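(* Let $(S,\rightarrow)$ be a PNTS, $X$ a variable and $\rho$ an interpretation. Then for every $s\in S$: (i) $\llbracket\mathbb P_{>0}(\Diamond X)\rrbracket_\rho(s)=1$ iff there exists $t\in S$ with $s\rightsquigarrow t$ and $\rho(X)(t)>0$; (ii) $\llbracket\mathbb P_{=1}(\Box X)\rrbracket_\rho(s)=1$ iff for all $t\in S$, $s\rightsquigarrow t$ implies $\rho(X)(t)=1$.
   Context: A PNTS is $(S,\rightarrow)$ with $\rightarrow\subseteq S\times\mathcal D(S)$, $\mathcal D(S)$ the probability distributions $d:S\to[0,1]$ with $\sum_sd(s)=1$. $s\rightsquigarrow t$ iff there is $d$ with $s\to d$ and $d(t)>0$. An interpretation $\rho$ assigns functions $S\to[0,1]$ to variables. Semantics: $\llbracket X\rrbracket_\rho=\rho(X)$, $\llbracket\Diamond\phi\rrbracket_\rho(x)=\sup_{x\to d}\sum_yd(y)\llbracket\phi\rrbracket_\rho(y)$ (empty sup $=0$), $\llbracket\Box\phi\rrbracket_\rho(x)=\inf_{x\to d}\sum_yd(y)\llbracket\phi\rrbracket_\rho(y)$ (empty inf $=1$), $\oplus$ and $\odot$ pointwise $\min(1,a+b)$ and $\max(0,a+b-1)$, and $\mu Y.\phi$, $\nu Y.\phi$ least/greatest fixed points of $f\mapsto\llbracket\phi\rrbracket_{\rho[f/Y]}$. $\mathbb P_{>0}\phi=\mu Y.(Y\oplus\phi)$ and $\mathbb P_{=1}\phi=\nu Y.(Y\odot\phi)$ with $Y$ not occurring in $\phi$. *)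

theory Defs
  imports "HOL-Probability.Probability"
begin

text \<open>A PNTS on the state type 's (S = UNIV) is a relation trans s d between states
 and probability distributions (pmfs; a sum-1 function has countable support).\<close>
type_synonym 's pnts = "'s \<Rightarrow> 's pmf \<Rightarrow> bool"

definition reach :: "'s pnts \<Rightarrow> 's \<Rightarrow> 's \<Rightarrow> bool" where
  "reach T s t \<longleftrightarrow> (\<exists>d. T s d \<and> pmf d t > 0)"

datatype 'v form =
    Var 'v
  | Dia "'v form"
  | Box "'v form"
  | Oplus "'v form" "'v form"
  | Odot "'v form" "'v form"
  | Mu 'v "'v form"
  | Nu 'v "'v form"

definition unit_valued :: "('s \<Rightarrow> real) \<Rightarrow> bool" where
  "unit_valued f \<longleftrightarrow> (\<forall>y. 0 \<le> f y \<and> f y \<le> 1)"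

text \<open>Least / greatest fixed points in the complete lattice of functions S \<rightarrow> [0,1]
 (Knaster--Tarski: pointwise meet of prefixed points, join of postfixed points).\<close>
definition lfpR :: "(('s \<Rightarrow> real) \<Rightarrow> ('s \<Rightarrow> real)) \<Rightarrow> 's \<Rightarrow> real" where
  "lfpR F = (\<lambda>x. Inf {f x | f. unit_valued f \<and> (\<forall>y. F f y \<le> f y)})"

definition gfpR :: "(('s \<Rightarrow> real) \<Rightarrow> ('s \<Rightarrow> real)) \<Rightarrow> 's \<Rightarrow> real" where
  "gfpR F = (\<lambda>x. Sup {f x | f. unit_valued f \<and> (\<forall>y. f y \<le> F f y)})"

definition expect :: "'s pmf \<Rightarrow> ('s \<Rightarrow> real) \<Rightarrow> real" where
  "expect d f = (\<Sum>\<^sub>\<infinity>y. pmf d y * f y)"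

definition dia_op :: "'s pnts \<Rightarrow> ('s \<Rightarrow> real) \<Rightarrow> 's \<Rightarrow> real" where
  "dia_op T f x = (if {d. T x d} = {} then 0 else Sup {expect d f | d. T x d})"

definition box_op :: "'s pnts \<Rightarrow> ('s \<Rightarrow> real) \<Rightarrow> 's \<Rightarrow> real" where
  "box_op T f x = (if {d. T x d} = {} then 1 else Inf {expect d f | d. T x d})"

primrec sem :: "'s pnts \<Rightarrow> ('v \<Rightarrow> 's \<Rightarrow> real) \<Rightarrow> 'v form \<Rightarrow> 's \<Rightarrow> real" where
  "sem T \<rho> (Var X) = \<rho> X"
| "sem T \<rho> (Dia \<phi>) = dia_op T (sem T \<rho> \<phi>)"
| "sem T \<rho> (Box \<phi>) = box_op T (sem T \<rho> \<phi>)"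
| "sem T \<rho> (Oplus \<phi> \<psi>) = (\<lambda>x. min 1 (sem T \<rho> \<phi> x + sem T \<rho> \<psi> x))"
| "sem T \<rho> (Odot \<phi> \<psi>) = (\<lambda>x. max 0 (sem T \<rho> \<phi> x + sem T \<rho> \<psi> x - 1))"
| "sem T \<rho> (Mu Y \<phi>) = lfpR (\<lambda>f. sem T (\<rho>(Y := f)) \<phi>)"
| "sem T \<rho> (Nu Y \<phi>) = gfpR (\<lambda>f. sem T (\<rho>(Y := f)) \<phi>)"

primrec vars :: "'v form \<Rightarrow> 'v set" where
  "vars (Var X) = {X}"
| "vars (Dia \<phi>) = vars \<phi>"
| "vars (Box \<phi>) = vars \<phi>"
| "vars (Oplus \<phi> \<psi>) = vars \<phi> \<union> vars \<psi>"
| "vars (Odot \<phi> \<psi>) = vars \<phi> \<union> vars \<psi>"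
| "vars (Mu Y \<phi>) = insert Y (vars \<phi>)"
| "vars (Nu Y \<phi>) = insert Y (vars \<phi>)"

definition Ppos :: "'v \<Rightarrow> 'v form \<Rightarrow> 'v form" where
  "Ppos Y \<phi> = Mu Y (Oplus (Var Y) \<phi>)"

definition Pone :: "'v \<Rightarrow> 'v form \<Rightarrow> 'v form" where
  "Pone Y \<phi> = Nu Y (Odot (Var Y) \<phi>)"

definition is_interp :: "('v \<Rightarrow> 's \<Rightarrow> real) \<Rightarrow> bool" where
  "is_interp \<rho> \<longleftrightarrow> (\<forall>X. unit_valued (\<rho> X))"

end

theory Submission
  imports Defs
begin

lemma pmf_infsum1: "infsum (pmf d) UNIV = 1"
  using infsetsum_infsum[OF pmf_abs_summable[of d UNIV]] infsetsum_pmf_eq_1[of d UNIV] by simp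

lemma pmf_summ: "pmf d summable_on UNIV"
  using pmf_infsum1[of d] infsum_not_exists by fastforce

lemma ex_summ:
  assumes "unit_valued f" shows "(\<lambda>y. pmf d y * f y) summable_on UNIV"
  apply (rule summable_on_comparison_test[OF pmf_summ])
  using assms unfolding unit_valued_def
  by (auto intro: mult_left_le mult_nonneg_nonneg)

lemma ex_bounds:
  assumes "unit_valued f" shows "0 \<le> expect d f" "expect d f \<le> 1"
proof -
  show "0 \<le> expect d f" unfolding expect_def
    using assms unfolding unit_valued_def by (auto intro!: infsum_nonneg)
  have "expect d f \<le> infsum (pmf d) UNIV" unfolding expect_def
    apply (rule infsum_mono[OF ex_summ[OF assms] pmf_summ])
    using assms unfolding unit_valued_def by (auto intro: mult_left_le)
  then show "expect d f \<le> 1" using pmf_infsum1[of d] by simp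
qed

lemma ex_pos:
  assumes "unit_valued f" shows "expect d f > 0 \<longleftrightarrow> (\<exists>y. pmf d y > 0 \<and> f y > 0)"
proof
  assume "expect d f > 0"
  show "\<exists>y. pmf d y > 0 \<and> f y > 0"
  proof (rule ccontr)
    assume "\<not> ?thesis"
    then have "\<And>y. pmf d y * f y = 0" using assms unfolding unit_valued_def
      by (metis antisym_conv1 mult_eq_0_iff pmf_nonneg)
    then have "expect d f = 0" unfolding expect_def by (simp add: infsum_0)
    with \<open>expect d f > 0\<close> show False by simp
  qed
next
  assume "\<exists>y. pmf d y > 0 \<and> f y > 0"
  then obtain y where y: "pmf d y > 0" "f y > 0" by blast
  have "sum (\<lambda>y. pmf d y * f y) {y} \<le> expect d f" unfolding expect_def
    apply (rule finite_sum_le_infsum[OF ex_summ[OF assms]])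
    using assms unfolding unit_valued_def by auto
  moreover have "pmf d y * f y > 0" using y by simp
  ultimately show "expect d f > 0" by simp
qed

lemma ex_one:
  assumes "unit_valued f" shows "expect d f \<ge> 1 \<longleftrightarrow> (\<forall>y. pmf d y > 0 \<longrightarrow> f y = 1)"
proof
  assume a: "expect d f \<ge> 1"
  have uf: "unit_valued (\<lambda>y. 1 - f y)" using assms unfolding unit_valued_def by auto
  have "infsum (\<lambda>y. pmf d y * f y + pmf d y * (1 - f y)) UNIV = expect d f + expect d (\<lambda>y. 1 - f y)"
    unfolding expect_def by (rule infsum_add[OF ex_summ[OF assms] ex_summ[OF uf]])
  moreover have "(\<lambda>y. pmf d y * f y + pmf d y * (1 - f y)) = pmf d"
    by (auto simp: algebra_simps)
  ultimately have "expect d (\<lambda>y. 1 - f y) \<le> 0" using pmf_infsum1[of d] a by simp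
  then have z: "\<And>y. pmf d y * (1 - f y) = 0"
    using nonneg_infsum_le_0D[OF _ ex_summ[OF uf]] uf unfolding expect_def unit_valued_def by auto
  show "\<forall>y. pmf d y > 0 \<longrightarrow> f y = 1"
    using z by (metis eq_iff_diff_eq_0 less_numeral_extra(3) mult_eq_0_iff)
next
  assume h: "\<forall>y. pmf d y > 0 \<longrightarrow> f y = 1"
  have "(\<lambda>y. pmf d y * f y) = pmf d"
  proof
    fix y show "pmf d y * f y = pmf d y"
      using h pmf_nonneg[of d y] by (cases "pmf d y > 0") (auto simp: less_le)
  qed
  then show "expect d f \<ge> 1" unfolding expect_def using pmf_infsum1[of d] by simp
qed

lemma lfp_lem:
  assumes g: "\<And>x. 0 \<le> g x"
  shows "lfpR (\<lambda>f x. min 1 (f x + g x)) s = (if g s > 0 then 1 else 0)"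
proof -
  let ?S = "{f s | f. unit_valued f \<and> (\<forall>y. min 1 (f y + g y) \<le> f y)}"
  define I where "I = (\<lambda>x. if g x > 0 then 1 else (0::real))"
  have I: "unit_valued I \<and> (\<forall>y. min 1 (I y + g y) \<le> I y)"
    unfolding I_def unit_valued_def using g by (auto simp: not_less intro: antisym)
  have "lfpR (\<lambda>f x. min 1 (f x + g x)) s = Inf ?S" unfolding lfpR_def by simp
  also have "\<dots> = (if g s > 0 then 1 else 0)"
  proof (cases "g s > 0")
    case True
    have "?S = {1}"
    proof safe
      fix f assume f: "unit_valued f" "\<forall>y. min 1 (f y + g y) \<le> f y"
      have "f s \<le> 1" using f(1) unfolding unit_valued_def by auto
      moreover from f(2) have "min 1 (f s + g s) \<le> f s" by auto
      ultimately show "f s = 1" using True by (auto simp: min_def split: if_splits)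
    next
      show "\<exists>f. 1 = f s \<and> unit_valued f \<and> (\<forall>y. min 1 (f y + g y) \<le> f y)"
        by (rule exI[of _ "\<lambda>_. 1"]) (auto simp: unit_valued_def)
    qed
    then show ?thesis using True by simp
  next
    case False
    have "I s \<in> ?S" using I by blast
    moreover have "I s = 0" using False I_def by simp
    moreover have "\<forall>x\<in>?S. 0 \<le> x" by (auto simp: unit_valued_def)
    ultimately have "Inf ?S = 0" by (metis (no_types, lifting) cInf_eq_minimum)
    then show ?thesis using False by simp
  qed
  finally show ?thesis .
qed

lemma gfp_lem:
  shows "gfpR (\<lambda>f x. max 0 (f x + h x - 1)) s = (if h s \<ge> 1 then 1 else 0)"
proof -
  let ?S = "{f s | f. unit_valued f \<and> (\<forall>y. f y \<le> max 0 (f y + h y - 1))}"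
  define J where "J = (\<lambda>x. if h x \<ge> 1 then 1 else (0::real))"
  have J: "unit_valued J \<and> (\<forall>y. J y \<le> max 0 (J y + h y - 1))"
    unfolding J_def unit_valued_def by auto
  have "gfpR (\<lambda>f x. max 0 (f x + h x - 1)) s = Sup ?S" unfolding gfpR_def by simp
  also have "\<dots> = (if h s \<ge> 1 then 1 else 0)"
  proof (cases "h s \<ge> 1")
    case True
    have "J s \<in> ?S" using J by blast
    moreover have "J s = 1" using True J_def by simp
    moreover have "\<forall>x\<in>?S. x \<le> 1" by (auto simp: unit_valued_def)
    ultimately have "Sup ?S = 1" by (metis (no_types, lifting) cSup_eq_maximum)
    then show ?thesis using True by simp
  next
    case False
    have "?S = {0}"
    proof safe
      fix f assume f: "unit_valued f" "\<forall>y. f y \<le> max 0 (f y + h y - 1)"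
      have "f s \<ge> 0" using f(1) unfolding unit_valued_def by auto
      moreover from f(2) have "f s \<le> max 0 (f s + h s - 1)" by auto
      ultimately show "f s = 0" using False by (auto simp: max_def split: if_splits)
    next
      show "\<exists>f. 0 = f s \<and> unit_valued f \<and> (\<forall>y. f y \<le> max 0 (f y + h y - 1))"
        by (rule exI[of _ "\<lambda>_. 0"]) (auto simp: unit_valued_def)
    qed
    then show ?thesis using False by simp
  qed
  finally show ?thesis .
qed

lemma dia_lem:
  assumes "unit_valued f"
  shows "0 \<le> dia_op T f x" "dia_op T f x > 0 \<longleftrightarrow> (\<exists>t. reach T x t \<and> f t > 0)"
proof -
  let ?E = "{expect d f | d. T x d}"
  have bdd: "bdd_above ?E" using ex_bounds(2)[OF assms] by (intro bdd_aboveI[where M=1]) auto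
  show "0 \<le> dia_op T f x"
  proof (cases "{d. T x d} = {}")
    case False
    then obtain d where "T x d" by auto
    then have "expect d f \<in> ?E" by blast
    then have "expect d f \<le> Sup ?E" using bdd by (rule cSup_upper)
    then show ?thesis using False ex_bounds[OF assms, of d] unfolding dia_op_def by simp
  qed (simp add: dia_op_def)
  show "dia_op T f x > 0 \<longleftrightarrow> (\<exists>t. reach T x t \<and> f t > 0)"
  proof (cases "{d. T x d} = {}")
    case False
    then have ne: "?E \<noteq> {}" by auto
    have "dia_op T f x > 0 \<longleftrightarrow> (\<exists>e\<in>?E. 0 < e)"
      using False less_cSup_iff[OF ne bdd] unfolding dia_op_def by simp
    also have "\<dots> \<longleftrightarrow> (\<exists>t. reach T x t \<and> f t > 0)"
      using ex_pos[OF assms] unfolding reach_def by blast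
    finally show ?thesis .
  qed (auto simp: dia_op_def reach_def)
qed

lemma box_lem:
  assumes "unit_valued f"
  shows "box_op T f x \<ge> 1 \<longleftrightarrow> (\<forall>t. reach T x t \<longrightarrow> f t = 1)"
proof (cases "{d. T x d} = {}")
  case False
  let ?E = "{expect d f | d. T x d}"
  have bdd: "bdd_below ?E" using ex_bounds(1)[OF assms] by (intro bdd_belowI[where m=0]) auto
  have ne: "?E \<noteq> {}" using False by auto
  have "box_op T f x \<ge> 1 \<longleftrightarrow> (\<forall>e\<in>?E. 1 \<le> e)"
    using False le_cInf_iff[OF ne bdd] unfolding box_op_def by simp
  also have "\<dots> \<longleftrightarrow> (\<forall>t. reach T x t \<longrightarrow> f t = 1)"
    using ex_one[OF assms] unfolding reach_def by blast
  finally show ?thesis .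
qed (auto simp: box_op_def reach_def)

theorem mainTheorem10:
  fixes T :: "'s pnts" and \<rho> :: "'v \<Rightarrow> 's \<Rightarrow> real" and X Y :: 'v and s :: 's
  assumes "is_interp \<rho>"
    and "Y \<notin> vars (Dia (Var X))" and "Y \<notin> vars (Box (Var X))"
  shows "(sem T \<rho> (Ppos Y (Dia (Var X))) s = 1 \<longleftrightarrow> (\<exists>t. reach T s t \<and> \<rho> X t > 0))
       \<and> (sem T \<rho> (Pone Y (Box (Var X))) s = 1 \<longleftrightarrow> (\<forall>t. reach T s t \<longrightarrow> \<rho> X t = 1))"
proof -
  have YX: "Y \<noteq> X" using assms(2) by simp
  have u: "unit_valued (\<rho> X)" using assms(1) unfolding is_interp_def by simp
  have e1: "sem T \<rho> (Ppos Y (Dia (Var X))) = lfpR (\<lambda>f x. min 1 (f x + dia_op T (\<rho> X) x))"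
    using YX by (simp add: Ppos_def)
  have e2: "sem T \<rho> (Pone Y (Box (Var X))) = gfpR (\<lambda>f x. max 0 (f x + box_op T (\<rho> X) x - 1))"
    using YX by (simp add: Pone_def)
  have a: "sem T \<rho> (Ppos Y (Dia (Var X))) s = 1 \<longleftrightarrow> (\<exists>t. reach T s t \<and> \<rho> X t > 0)"
    unfolding e1 lfp_lem[OF dia_lem(1)[OF u]]
    using dia_lem(2)[OF u, of T s] by (simp split: if_splits)
  have b: "sem T \<rho> (Pone Y (Box (Var X))) s = 1 \<longleftrightarrow> (\<forall>t. reach T s t \<longrightarrow> \<rho> X t = 1)"
    unfolding e2 gfp_lem
    using box_lem[OF u, of T s] by (simp split: if_splits)
  show ?thesis using a b by blast
qed

end
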